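(* Let $\Omega\subset\mathbb{R}^n$ be a bounded domain, $(d_1,d_2,f,\kappa)\in(0,\infty)^4$, and for $\ell\in\{1,2\}$ let $\gamma_\ell:\Omega\times\Omega\to[0,\infty)$ be measurable with $\int_\Omega\gamma_\ell(y,x)\,\mathrm{d}y=\int_\Omega\gamma_\ell(x,y)\,\mathrm{d}y\le\gamma_\infty<\infty$ for $x\in\Omega$, some $\gamma_\infty\ge1$. Let $(u^0,v^0)\in X^+\times X^+$ and let $(u,v)\in C^1([0,\infty),X^+\times X^+)$ be the solution to $$\partial_t u=d_1\Gamma_{\gamma_1}u-uv^2+f(1-u),\quad \partial_t v=d_2\Gamma_{\gamma_2}v+uv^2-(f+\kappa)v\ \text{ in }(0,\infty)\times\Omega,\quad (u,v)(0)=(u^0,v^0).$$ Then for $(t,x)\in[0,\infty)\times\Omega$, $$0\le u(t,x)\le1+e^{-ft}(\|u^0\|_\infty-1)_+,$$ $$0\le(u+v)(t,x)\le e^{-tf}\|u^0+v^0\|_\infty+\frac{1-e^{-tf}}{f}\Big[2\big(|d_1-d_2|\gamma_\infty+md_2\big)(1+\|u^0\|_\infty)+f\Big],$$ where $m:=\operatorname*{ess\,sup}_{x\in\Omega}\int_\Omega|(\gamma_1-\gamma_2)(x,y)|\,\mathrm{d}y\le2\gamma_\infty$. In particular $\limsup_{t\to\infty}\|u(t)\|_\infty\le1$, and if $\|u^0\|_\infty\le1$ then $\|u(t)\|_\infty\le1$ for all $t\ge0$.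
   Context: $X:=L_\infty(\Omega)$, $X^+:=\{z\in X: z\ge0\text{ a.e.}\}$, $\Gamma_\gamma z(x):=\int_\Omega\gamma(x,y)(z(y)-z(x))\,\mathrm{d}y$. *)

theory Defs
  imports "HOL-Analysis.Analysis" "HOL-Probability.Essential_Supremum"
begin

definition Linf_norm :: "'a measure \<Rightarrow> ('a \<Rightarrow> real) \<Rightarrow> ereal" where
  "Linf_norm M z = esssup M (\<lambda>x. ereal \<bar>z x\<bar>)"

definition in_Linf :: "'a measure \<Rightarrow> ('a \<Rightarrow> real) \<Rightarrow> bool" where
  "in_Linf M z \<longleftrightarrow> z \<in> borel_measurable M \<and> Linf_norm M z < \<infinity>"

definition in_Linf_pos :: "'a measure \<Rightarrow> ('a \<Rightarrow> real) \<Rightarrow> bool" where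
  "in_Linf_pos M z \<longleftrightarrow> in_Linf M z \<and> (AE x in M. 0 \<le> z x)"

text \<open>The map t -> u t is in C^1([0,oo), L-infinity(M)) with derivative t -> u' t
  (derivative and continuity taken in the L-infinity norm; one-sided at t = 0).\<close>
definition C1_Linf :: "'a measure \<Rightarrow> (real \<Rightarrow> 'a \<Rightarrow> real) \<Rightarrow> (real \<Rightarrow> 'a \<Rightarrow> real) \<Rightarrow> bool" where
  "C1_Linf M u u' \<longleftrightarrow>
     (\<forall>t\<ge>0. in_Linf M (u t) \<and> in_Linf M (u' t)) \<and>
     (\<forall>t\<ge>0. ((\<lambda>h. Linf_norm M (\<lambda>x. (u (t + h) x - u t x) / h - u' t x)) \<longlongrightarrow> 0)
                (at 0 within {-t..})) \<and>
     (\<forall>t\<ge>0. ((\<lambda>s. Linf_norm M (\<lambda>x. u' s x - u' t x)) \<longlongrightarrow> 0) (at t within {0..}))"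

definition Gamma_op :: "'a::euclidean_space set \<Rightarrow> ('a \<Rightarrow> 'a \<Rightarrow> real) \<Rightarrow> ('a \<Rightarrow> real) \<Rightarrow> 'a \<Rightarrow> real" where
  "Gamma_op \<Omega> \<gamma> z x = (\<integral>y. \<gamma> x y * (z y - z x) \<partial>lebesgue_on \<Omega>)"

definition admissible_kernel :: "'a::euclidean_space set \<Rightarrow> real \<Rightarrow> ('a \<Rightarrow> 'a \<Rightarrow> real) \<Rightarrow> bool" where
  "admissible_kernel \<Omega> ginf \<gamma> \<longleftrightarrow>
     (\<lambda>(x, y). \<gamma> x y) \<in> borel_measurable (lebesgue_on (\<Omega> \<times> \<Omega>)) \<and>
     (\<forall>x\<in>\<Omega>. \<forall>y\<in>\<Omega>. 0 \<le> \<gamma> x y) \<and>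
     (\<forall>x\<in>\<Omega>. (\<integral>\<^sup>+y. ennreal (\<gamma> y x) \<partial>lebesgue_on \<Omega>) = (\<integral>\<^sup>+y. ennreal (\<gamma> x y) \<partial>lebesgue_on \<Omega>)
            \<and> (\<integral>\<^sup>+y. ennreal (\<gamma> x y) \<partial>lebesgue_on \<Omega>) \<le> ennreal ginf)"

end

theory Submission
  imports Defs
begin

lemma kernel_sections:
  fixes \<gamma> :: "'a::euclidean_space \<Rightarrow> 'a \<Rightarrow> real"
  assumes meas: "(\<lambda>(x, y). \<gamma> x y) \<in> borel_measurable (lebesgue_on (\<Omega> \<times> \<Omega>))"
    and Om: "open \<Omega>"
  obtains G where "G \<in> borel_measurable (lborel \<Otimes>\<^sub>M lborel)"
    "AE x in lebesgue. AE y in lebesgue. (if (x,y) \<in> \<Omega> \<times> \<Omega> then \<gamma> x y else 0) = G (x,y)"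
proof -
  have OO: "\<Omega> \<times> \<Omega> \<in> sets (lebesgue :: ('a \<times> 'a) measure)"
    using Om by (simp add: open_Times borel_open)
  let ?F = "\<lambda>p. if p \<in> \<Omega> \<times> \<Omega> then (\<lambda>(x, y). \<gamma> x y) p else 0"
  have "?F \<in> borel_measurable lebesgue"
    using borel_measurable_if[OF OO] meas by blast
  then obtain G where G: "G \<in> borel_measurable lborel" "AE p in lborel. ?F p = G p"
    using completion_ex_borel_measurable_real by blast
  have G': "G \<in> borel_measurable (lborel \<Otimes>\<^sub>M lborel)"
    using G(1) by (simp add: lborel_prod)
  have "AE p in lborel \<Otimes>\<^sub>M lborel. ?F p = G p"
    using G(2) by (simp only: lborel_prod)
  then have "AE x in lborel. AE y in lborel. ?F (x,y) = G (x,y)"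
    by (rule pair_sigma_finite.AE_pair[rotated]) (simp add: pair_sigma_finite_def lborel.sigma_finite_measure_axioms)
  then have "AE x in lebesgue. AE y in lebesgue. ?F (x,y) = G (x,y)"
    by (intro AE_completion) (auto elim!: eventually_mono intro: AE_completion)
  then show ?thesis using that[OF G'] by (auto simp: case_prod_beta)
qed

lemma kernel_sections2:
  fixes \<gamma> :: "'a::euclidean_space \<Rightarrow> 'a \<Rightarrow> real"
  assumes meas: "(\<lambda>(x, y). \<gamma> x y) \<in> borel_measurable (lebesgue_on (\<Omega> \<times> \<Omega>))"
    and Om: "open \<Omega>"
  obtains G where "G \<in> borel_measurable (lborel \<Otimes>\<^sub>M lborel)"
    "AE x in lebesgue. x \<in> \<Omega> \<longrightarrow> (\<lambda>y. if y \<in> \<Omega> then \<gamma> x y else 0) \<in> borel_measurable lebesgue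
        \<and> (AE y in lebesgue. (if y \<in> \<Omega> then \<gamma> x y else 0) = G (x,y))"
proof -
  obtain G where G: "G \<in> borel_measurable (lborel \<Otimes>\<^sub>M lborel)"
    "AE x in lebesgue. AE y in lebesgue. (if (x,y) \<in> \<Omega> \<times> \<Omega> then \<gamma> x y else 0) = G (x,y)"
    using kernel_sections[OF meas Om] by blast
  have "AE x in lebesgue. x \<in> \<Omega> \<longrightarrow> (\<lambda>y. if y \<in> \<Omega> then \<gamma> x y else 0) \<in> borel_measurable lebesgue
        \<and> (AE y in lebesgue. (if y \<in> \<Omega> then \<gamma> x y else 0) = G (x,y))"
    using G(2)
  proof (rule eventually_mono, intro impI conjI)
    fix x assume x: "x \<in> \<Omega>" and ae: "AE y in lebesgue. (if (x,y) \<in> \<Omega> \<times> \<Omega> then \<gamma> x y else 0) = G (x,y)"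
    show ae': "AE y in lebesgue. (if y \<in> \<Omega> then \<gamma> x y else 0) = G (x,y)"
      using ae x by (auto elim!: eventually_mono)
    have "(\<lambda>y. G (x,y)) \<in> borel_measurable lborel"
      using measurable_Pair2[OF G(1)] by simp
    then have "(\<lambda>y. G (x,y)) \<in> borel_measurable lebesgue"
      by (rule measurable_completion)
    then show "(\<lambda>y. if y \<in> \<Omega> then \<gamma> x y else 0) \<in> borel_measurable lebesgue"
      by (rule borel_measurable_AE) (use ae' in \<open>auto elim!: eventually_mono\<close>)
  qed
  then show ?thesis using that[OF G(1)] by blast
qed

lemma AE_lebesgue_on_iff:
  assumes "open \<Omega>"
  shows "(AE x in lebesgue_on \<Omega>. P x) \<longleftrightarrow> (AE x in lebesgue. x \<in> \<Omega> \<longrightarrow> P x)"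
  using assms by (simp add: AE_restrict_space_iff borel_open)

lemma kernel_good:
  fixes \<gamma> :: "'a::euclidean_space \<Rightarrow> 'a \<Rightarrow> real"
  assumes ker: "admissible_kernel \<Omega> ginf \<gamma>" and Om: "open \<Omega>" and g0: "0 \<le> ginf"
  shows "AE x in lebesgue_on \<Omega>. integrable (lebesgue_on \<Omega>) (\<gamma> x) \<and> (\<forall>y\<in>\<Omega>. 0 \<le> \<gamma> x y)
     \<and> 0 \<le> (\<integral>y. \<gamma> x y \<partial>lebesgue_on \<Omega>) \<and> (\<integral>y. \<gamma> x y \<partial>lebesgue_on \<Omega>) \<le> ginf"
proof -
  obtain G where G: "G \<in> borel_measurable (lborel \<Otimes>\<^sub>M lborel)"
    "AE x in lebesgue. x \<in> \<Omega> \<longrightarrow> (\<lambda>y. if y \<in> \<Omega> then \<gamma> x y else 0) \<in> borel_measurable lebesgue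
        \<and> (AE y in lebesgue. (if y \<in> \<Omega> then \<gamma> x y else 0) = G (x,y))"
    using kernel_sections2[OF _ Om, of \<gamma>] ker unfolding admissible_kernel_def by blast
  have "AE x in lebesgue. x \<in> \<Omega> \<longrightarrow> integrable (lebesgue_on \<Omega>) (\<gamma> x) \<and> (\<forall>y\<in>\<Omega>. 0 \<le> \<gamma> x y)
     \<and> 0 \<le> (\<integral>y. \<gamma> x y \<partial>lebesgue_on \<Omega>) \<and> (\<integral>y. \<gamma> x y \<partial>lebesgue_on \<Omega>) \<le> ginf"
    using G(2)
  proof (rule eventually_mono, intro impI)
    fix x assume x: "x \<in> \<Omega>" and h: "x \<in> \<Omega> \<longrightarrow> (\<lambda>y. if y \<in> \<Omega> then \<gamma> x y else 0) \<in> borel_measurable lebesgue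
        \<and> (AE y in lebesgue. (if y \<in> \<Omega> then \<gamma> x y else 0) = G (x,y))"
    have m: "\<gamma> x \<in> borel_measurable (lebesgue_on \<Omega>)"
      using h x borel_measurable_if_D by blast
    have nn: "\<forall>y\<in>\<Omega>. 0 \<le> \<gamma> x y" "(\<integral>\<^sup>+y. ennreal (\<gamma> x y) \<partial>lebesgue_on \<Omega>) \<le> ennreal ginf"
      using ker x unfolding admissible_kernel_def by auto
    have nnae: "AE y in lebesgue_on \<Omega>. 0 \<le> \<gamma> x y"
      using nn(1) by (simp add: AE_lebesgue_on_iff[OF Om])
    have int: "integrable (lebesgue_on \<Omega>) (\<gamma> x)"
      by (rule integrableI_nonneg[OF m nnae]) (use nn(2) in \<open>auto simp: top.not_eq_extremum intro: le_less_trans\<close>)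
    have eq: "(\<integral>y. \<gamma> x y \<partial>lebesgue_on \<Omega>) = enn2real (\<integral>\<^sup>+y. ennreal (\<gamma> x y) \<partial>lebesgue_on \<Omega>)"
      by (rule integral_eq_nn_integral[OF m nnae])
    have "(\<integral>y. \<gamma> x y \<partial>lebesgue_on \<Omega>) \<le> ginf"
      unfolding eq using enn2real_mono[OF nn(2)] g0 by simp
    moreover have "0 \<le> (\<integral>y. \<gamma> x y \<partial>lebesgue_on \<Omega>)"
      by (rule integral_nonneg_AE[OF nnae])
    ultimately show "integrable (lebesgue_on \<Omega>) (\<gamma> x) \<and> (\<forall>y\<in>\<Omega>. 0 \<le> \<gamma> x y)
     \<and> 0 \<le> (\<integral>y. \<gamma> x y \<partial>lebesgue_on \<Omega>) \<and> (\<integral>y. \<gamma> x y \<partial>lebesgue_on \<Omega>) \<le> ginf"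
      using int nn(1) by blast
  qed
  then show ?thesis by (simp only: AE_lebesgue_on_iff[OF Om])
qed

lemma kernel_diff_meas:
  fixes \<gamma>1 \<gamma>2 :: "'a::euclidean_space \<Rightarrow> 'a \<Rightarrow> real"
  assumes m1: "(\<lambda>(x, y). \<gamma>1 x y) \<in> borel_measurable (lebesgue_on (\<Omega> \<times> \<Omega>))"
    and m2: "(\<lambda>(x, y). \<gamma>2 x y) \<in> borel_measurable (lebesgue_on (\<Omega> \<times> \<Omega>))"
    and Om: "open \<Omega>"
  shows "(\<lambda>x. \<integral>y. \<bar>\<gamma>1 x y - \<gamma>2 x y\<bar> \<partial>lebesgue_on \<Omega>) \<in> borel_measurable (lebesgue_on \<Omega>)"
proof -
  obtain G1 where G1: "G1 \<in> borel_measurable (lborel \<Otimes>\<^sub>M lborel)"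
    "AE x in lebesgue. x \<in> \<Omega> \<longrightarrow> (\<lambda>y. if y \<in> \<Omega> then \<gamma>1 x y else 0) \<in> borel_measurable lebesgue
        \<and> (AE y in lebesgue. (if y \<in> \<Omega> then \<gamma>1 x y else 0) = G1 (x,y))"
    using kernel_sections2[OF m1 Om] by blast
  obtain G2 where G2: "G2 \<in> borel_measurable (lborel \<Otimes>\<^sub>M lborel)"
    "AE x in lebesgue. x \<in> \<Omega> \<longrightarrow> (\<lambda>y. if y \<in> \<Omega> then \<gamma>2 x y else 0) \<in> borel_measurable lebesgue
        \<and> (AE y in lebesgue. (if y \<in> \<Omega> then \<gamma>2 x y else 0) = G2 (x,y))"
    using kernel_sections2[OF m2 Om] by blast
  define H where "H x = (\<integral>y. \<bar>G1 (x,y) - G2 (x,y)\<bar> \<partial>lborel)" for x :: 'a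
  have GG: "(\<lambda>p. \<bar>G1 p - G2 p\<bar>) \<in> borel_measurable (lborel \<Otimes>\<^sub>M lborel)"
    using G1(1) G2(1) by measurable
  have "case_prod (\<lambda>x y. \<bar>G1 (x,y) - G2 (x,y)\<bar>) \<in> borel_measurable (lborel \<Otimes>\<^sub>M lborel)"
    using GG by (simp add: case_prod_beta')
  then have Hm: "H \<in> borel_measurable lborel"
    unfolding H_def by (rule lborel.borel_measurable_lebesgue_integral)
  have OmS: "\<Omega> \<inter> space lebesgue \<in> sets lebesgue"
    using Om by (simp add: borel_open)
  let ?\<Phi> = "\<lambda>x. \<integral>y. \<bar>\<gamma>1 x y - \<gamma>2 x y\<bar> \<partial>lebesgue_on \<Omega>"
  have ae: "AE x in lebesgue. (if x \<in> \<Omega> then ?\<Phi> x else 0) = (if x \<in> \<Omega> then H x else 0)"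
    using G1(2) G2(2)
  proof (eventually_elim)
    case (elim x)
    show ?case
    proof (cases "x \<in> \<Omega>")
      case True
      let ?F1 = "\<lambda>y. if y \<in> \<Omega> then \<gamma>1 x y else 0"
      let ?F2 = "\<lambda>y. if y \<in> \<Omega> then \<gamma>2 x y else 0"
      have F: "?F1 \<in> borel_measurable lebesgue" "?F2 \<in> borel_measurable lebesgue"
        "AE y in lebesgue. ?F1 y = G1 (x,y)" "AE y in lebesgue. ?F2 y = G2 (x,y)"
        using elim True by auto
      have Gx: "(\<lambda>y. \<bar>G1 (x,y) - G2 (x,y)\<bar>) \<in> borel_measurable lborel"
        using measurable_Pair2[OF GG] by simp
      have "?\<Phi> x = (\<integral>y. indicator \<Omega> y *\<^sub>R \<bar>\<gamma>1 x y - \<gamma>2 x y\<bar> \<partial>lebesgue)"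
        by (rule integral_restrict_space[OF OmS])
      also have "\<dots> = (\<integral>y. \<bar>?F1 y - ?F2 y\<bar> \<partial>lebesgue)"
        by (rule Bochner_Integration.integral_cong) (auto simp: indicator_def)
      also have "\<dots> = (\<integral>y. \<bar>G1 (x,y) - G2 (x,y)\<bar> \<partial>lebesgue)"
        apply (rule integral_cong_AE)
        apply (intro borel_measurable_abs borel_measurable_diff F(1) F(2))
        using Gx measurable_completion apply blast
        using F(3,4) by eventually_elim simp
      also have "\<dots> = H x"
        unfolding H_def by (rule integral_completion[OF Gx])
      finally show ?thesis using True by simp
    qed simp
  qed
  have "(\<lambda>x. if x \<in> \<Omega> then H x else 0) \<in> borel_measurable lebesgue"
    using Hm Om by (intro borel_measurable_if_I measurable_completion[THEN measurable_restrict_space1]) (auto simp: borel_open)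
  then have "(\<lambda>x. if x \<in> \<Omega> then ?\<Phi> x else 0) \<in> borel_measurable lebesgue"
    by (rule borel_measurable_AE) (use ae in \<open>auto elim!: eventually_mono\<close>)
  then show ?thesis by (rule borel_measurable_if_D)
qed

lemma cmp0:
  fixes D :: "real \<Rightarrow> real" and f :: real
  assumes f: "0 < f" and cont: "continuous_on {0..} D" and D0: "D 0 \<le> 0"
    and der: "\<forall>t\<ge>0. \<forall>\<epsilon>>0. \<exists>\<delta>>0. \<forall>h. 0 < h \<and> h < \<delta> \<longrightarrow> D (t + h) \<le> D t + h * (- f * D t + \<epsilon>)"
    and t0: "0 \<le> t0"
  shows "D t0 \<le> 0"
proof (rule ccontr)
  assume "\<not> D t0 \<le> 0"
  then have Dt0: "D t0 > 0" by simp
  define \<epsilon> where "\<epsilon> = D t0 / (2 * (1 + t0))"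
  have "0 < 2 * (1 + t0)" using t0 by simp
  then have \<epsilon>: "\<epsilon> > 0" using Dt0 unfolding \<epsilon>_def by (rule divide_pos_pos[rotated])
  have "\<epsilon> * (1 + t0) = D t0 / 2" using t0 unfolding \<epsilon>_def by (simp add: field_simps)
  then have "\<epsilon> * (1 + t0) < D t0" using Dt0 by linarith
  define S where "S = {t. 0 \<le> t \<and> D t > \<epsilon> * (1 + t)}"
  have t0S: "t0 \<in> S" using \<open>\<epsilon> * (1 + t0) < D t0\<close> t0 by (simp add: S_def)
  have bdd: "bdd_below S" unfolding S_def by (rule bdd_belowI[of _ 0]) auto
  define s where "s = Inf S"
  have s_low: "\<And>t. t \<in> S \<Longrightarrow> s \<le> t" unfolding s_def using bdd by (rule cInf_lower[rotated])
  have s_great: "\<And>c. (\<And>t. t \<in> S \<Longrightarrow> c \<le> t) \<Longrightarrow> c \<le> s"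
    unfolding s_def using t0S by (intro cInf_greatest) auto
  have s0: "0 \<le> s" by (rule s_great) (auto simp: S_def)
  have before: "D t \<le> \<epsilon> * (1 + t)" if "0 \<le> t" "t < s" for t
  proof (rule ccontr)
    assume "\<not> ?thesis" then have "t \<in> S" using that by (simp add: S_def)
    then show False using s_low that by fastforce
  qed
  define E where "E t = D t - \<epsilon> * (1 + t)" for t
  have contE: "continuous_on {0..} E"
    unfolding E_def by (intro continuous_intros cont)
  have near: "\<exists>d>0. \<forall>t'\<in>{0..}. dist t' s < d \<longrightarrow> dist (E t') (E s) < e" if "e > 0" for e
    using contE s0 that unfolding continuous_on_iff by auto
  have Es_ge: "E s \<ge> 0"
  proof (rule ccontr)
    assume "\<not> E s \<ge> 0"
    then obtain d where d: "d > 0" "\<forall>t'\<in>{0..}. dist t' s < d \<longrightarrow> dist (E t') (E s) < - E s"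
      using near[of "- E s"] by auto
    have "s + d \<le> s"
    proof (rule s_great)
      fix t assume tS: "t \<in> S"
      then have "E t > 0" "t \<ge> 0" by (auto simp: S_def E_def)
      moreover have "s \<le> t" using s_low tS by auto
      ultimately show "s + d \<le> t"
      proof (intro leI notI)
        assume "t < s + d" "0 < E t" "0 \<le> t" "s \<le> t"
        then have "\<bar>E t - E s\<bar> < - E s" using d(2)[rule_format, of t] by (auto simp: dist_real_def)
        then show False using \<open>0 < E t\<close> by linarith
      qed
    qed
    then show False using d by simp
  qed
  have spos: "s > 0"
  proof (rule ccontr)
    assume "\<not> s > 0" then have "s = 0" using s0 by simp
    then show False using Es_ge D0 \<epsilon> by (simp add: E_def)
  qed
  have Es_le: "E s \<le> 0"
  proof (rule ccontr)
    assume "\<not> E s \<le> 0"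
    then obtain d where d: "d > 0" "\<forall>t'\<in>{0..}. dist t' s < d \<longrightarrow> dist (E t') (E s) < E s"
      using near[of "E s"] by auto
    define t' where "t' = s - min d s / 2"
    have t': "0 \<le> t'" "t' < s" "dist t' s < d" using d spos by (auto simp: t'_def dist_real_def)
    then have "E t' > 0" using d(2)[rule_format, of t'] by (auto simp: dist_real_def)
    then show False using before[OF t'(1,2)] by (simp add: E_def)
  qed
  have Ds: "D s = \<epsilon> * (1 + s)" using Es_ge Es_le by (simp add: E_def)
  have Dspos: "D s > 0" using Ds \<epsilon> s0 by (simp add: add_pos_nonneg)
  obtain \<delta> where \<delta>: "\<delta> > 0" "\<forall>h. 0 < h \<and> h < \<delta> \<longrightarrow> D (s + h) \<le> D s + h * (- f * D s + \<epsilon>)"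
    using der s0 \<epsilon> by blast
  have "s + \<delta> \<le> s"
  proof (rule s_great)
    fix t assume tS: "t \<in> S"
    have st: "s \<le> t" using s_low tS by auto
    have "t \<noteq> s" using tS Ds by (auto simp: S_def)
    show "s + \<delta> \<le> t"
    proof (rule ccontr)
      assume "\<not> s + \<delta> \<le> t"
      then have h: "0 < t - s" "t - s < \<delta>" using st \<open>t \<noteq> s\<close> by auto
      have "D t \<le> D s + (t - s) * (- f * D s + \<epsilon>)" using \<delta>(2)[rule_format, OF conjI[OF h]] by simp
      also have "\<dots> < D s + (t - s) * \<epsilon>"
        using h f Dspos by (simp add: mult_pos_pos)
      also have "\<dots> = \<epsilon> * (1 + t)" using Ds by (simp add: algebra_simps)
      finally show False using tS by (simp add: S_def)
    qed
  qed
  then show False using \<delta> by simp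
qed

lemma exp_neg_upper: "0 \<le> (y::real) \<Longrightarrow> exp (- y) \<le> 1 - y + y\<^sup>2"
proof -
  assume y: "0 \<le> y"
  have l: "1 + y + y\<^sup>2 / 2 \<le> exp y" using exp_lower_Taylor_quadratic[OF y] by simp
  have p: "0 < 1 + y + y\<^sup>2 / 2" using y by (simp add: add_pos_nonneg)
  have "(1 - y + y\<^sup>2) * (1 + y + y\<^sup>2 / 2) = 1 + y^2/2 + y^3/2 + y^4/2"
    by (simp add: power2_eq_square power3_eq_cube power4_eq_xxxx field_simps)
  also have "\<dots> \<ge> 1" using y by simp
  finally have "1 \<le> (1 - y + y\<^sup>2) * (1 + y + y\<^sup>2 / 2)" .
  then have "1 / (1 + y + y\<^sup>2 / 2) \<le> 1 - y + y\<^sup>2" using p by (simp add: divide_le_eq mult.commute)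
  moreover have "exp (- y) \<le> 1 / (1 + y + y\<^sup>2 / 2)"
    using l p by (simp add: exp_minus inverse_eq_divide frac_le)
  ultimately show ?thesis by linarith
qed

lemma cmp:
  fixes N :: "real \<Rightarrow> real" and f c b :: real
  assumes f: "0 < f" and cont: "continuous_on {0..} N" and N0: "N 0 \<le> c + b"
    and der: "\<forall>t\<ge>0. \<forall>\<epsilon>>0. \<exists>\<delta>>0. \<forall>h. 0 < h \<and> h < \<delta> \<longrightarrow> N (t + h) \<le> N t + h * (f * c - f * N t + \<epsilon>)"
    and t0: "0 \<le> t0"
  shows "N t0 \<le> c + b * exp (- f * t0)"
proof -
  define D where "D t = N t - c - b * exp (- f * t)" for t
  have "continuous_on {0..} D" unfolding D_def by (intro continuous_intros cont)
  moreover have "D 0 \<le> 0" using N0 by (simp add: D_def)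
  moreover have "\<forall>t\<ge>0. \<forall>\<epsilon>>0. \<exists>\<delta>>0. \<forall>h. 0 < h \<and> h < \<delta> \<longrightarrow> D (t + h) \<le> D t + h * (- f * D t + \<epsilon>)"
  proof (intro allI impI)
    fix t \<epsilon> :: real assume t: "0 \<le> t" and \<epsilon>: "0 < \<epsilon>"
    obtain \<delta>1 where \<delta>1: "\<delta>1 > 0" "\<forall>h. 0 < h \<and> h < \<delta>1 \<longrightarrow> N (t + h) \<le> N t + h * (f * c - f * N t + \<epsilon>/2)"
      using der t \<epsilon> by (meson half_gt_zero)
    define \<delta> where "\<delta> = min \<delta>1 (\<epsilon> / (2 * (\<bar>b\<bar> * f\<^sup>2 + 1)))"
    have "0 < 2 * (\<bar>b\<bar> * f\<^sup>2 + 1)" by (simp add: add_nonneg_pos)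
    then have \<delta>: "\<delta> > 0" using \<delta>1 \<epsilon> unfolding \<delta>_def by (simp del: distrib_left distrib_right)
    show "\<exists>\<delta>>0. \<forall>h. 0 < h \<and> h < \<delta> \<longrightarrow> D (t + h) \<le> D t + h * (- f * D t + \<epsilon>)"
    proof (intro exI[of _ \<delta>] conjI allI impI \<delta>)
      fix h assume h: "0 < h \<and> h < \<delta>"
      define E where "E = exp (- f * t)"
      define y where "y = f * h"
      have y: "0 \<le> y" using h f by (simp add: y_def)
      have E: "0 < E" "E \<le> 1" using f t by (auto simp: E_def)
      have e1: "1 - y \<le> exp (- y)" using exp_ge_add_one_self[of "- y"] by simp
      have e2: "exp (- y) \<le> 1 - y + y\<^sup>2" by (rule exp_neg_upper[OF y])
      have hb: "h * (\<bar>b\<bar> * f\<^sup>2 + 1) \<le> \<epsilon> / 2"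
        using h unfolding \<delta>_def by (simp add: field_simps add_pos_nonneg)
      have key: "b * E * (1 - y - exp (- y)) \<le> h * \<epsilon> / 2"
      proof -
        have "b * E * (1 - y - exp (- y)) \<le> \<bar>b\<bar> * E * y\<^sup>2"
        proof (cases "b \<ge> 0")
          case True
          then have "b * E * (1 - y - exp (- y)) \<le> 0"
            using e1 E by (simp add: mult_nonneg_nonpos)
          also have "\<dots> \<le> \<bar>b\<bar> * E * y\<^sup>2" using E by simp
          finally show ?thesis .
        next
          case False
          then have "b * E * (1 - y - exp (- y)) = \<bar>b\<bar> * E * (exp (- y) - 1 + y)" by (simp add: algebra_simps)
          also have "\<dots> \<le> \<bar>b\<bar> * E * y\<^sup>2"
            using e2 E by (intro mult_left_mono) auto
          finally show ?thesis .
        qed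
        also have "\<dots> \<le> \<bar>b\<bar> * y\<^sup>2"
        proof -
          have "0 \<le> \<bar>b\<bar> * y\<^sup>2 * (1 - E)" using E by simp
          then show ?thesis by (simp add: algebra_simps)
        qed
        also have "\<dots> = h * (h * (\<bar>b\<bar> * f\<^sup>2))" by (simp add: y_def power2_eq_square)
        also have "\<dots> \<le> h * (h * (\<bar>b\<bar> * f\<^sup>2 + 1))" using h by simp
        also have "\<dots> \<le> h * (\<epsilon> / 2)" using hb h by (intro mult_left_mono) auto
        finally show ?thesis by simp
      qed
      have Nh: "N (t + h) \<le> N t + h * (f * c - f * N t + \<epsilon>/2)" using \<delta>1 h unfolding \<delta>_def by auto
      have expadd: "exp (- f * (t + h)) = E * exp (- y)"
        by (simp add: E_def y_def algebra_simps flip: exp_add)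
      have "D (t + h) = N (t + h) - c - b * E * exp (- y)" unfolding D_def expadd by simp
      also have "\<dots> \<le> N t + h * (f * c - f * N t + \<epsilon>/2) - c - b * E * exp (- y)" using Nh by simp
      also have "\<dots> \<le> D t + h * (- f * D t + \<epsilon>)"
        using key unfolding D_def E_def[symmetric] y_def by (simp add: algebra_simps)
      finally show "D (t + h) \<le> D t + h * (- f * D t + \<epsilon>)" .
    qed
  qed
  ultimately have "D t0 \<le> 0" by (rule cmp0[OF f _ _ _ t0])
  then show ?thesis by (simp add: D_def)
qed

lemma AE_False_iff: "(AE x in M. False) \<longleftrightarrow> emeasure M (space M) = 0"
  using ae_filter_eq_bot_iff[of M] trivial_limit_def by metis

lemma Linf_AE: "AE x in M. ereal \<bar>z x\<bar> \<le> Linf_norm M z"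
  unfolding Linf_norm_def by (rule esssup_AE)

lemma Linf_le:
  assumes "z \<in> borel_measurable M" "AE x in M. \<bar>z x\<bar> \<le> c"
  shows "Linf_norm M z \<le> ereal c"
  unfolding Linf_norm_def
  by (rule esssup_I) (use assms in auto)

lemma Linf_real:
  assumes "in_Linf M z" and pos: "emeasure M (space M) \<noteq> 0"
  shows "Linf_norm M z = ereal (real_of_ereal (Linf_norm M z))"
    and "0 \<le> real_of_ereal (Linf_norm M z)"
    and "AE x in M. \<bar>z x\<bar> \<le> real_of_ereal (Linf_norm M z)"
proof -
  have ge: "Linf_norm M z \<ge> 0"
  proof (rule ccontr)
    assume "\<not> Linf_norm M z \<ge> 0"
    note neg = this
    have "AE x in M. False" using Linf_AE[where M=M and z=z]
    proof eventually_elim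
      case (elim x)
      have "0 \<le> ereal \<bar>z x\<bar>" by simp
      then show False using elim neg by (meson order_trans)
    qed
    then show False using pos AE_False_iff by blast
  qed
  have lt: "Linf_norm M z < \<infinity>" using assms(1) by (simp add: in_Linf_def)
  show eq: "Linf_norm M z = ereal (real_of_ereal (Linf_norm M z))"
    using ge lt by (cases "Linf_norm M z") auto
  show "0 \<le> real_of_ereal (Linf_norm M z)" using ge by (simp add: real_of_ereal_pos)
  show "AE x in M. \<bar>z x\<bar> \<le> real_of_ereal (Linf_norm M z)"
    using Linf_AE[where M=M and z=z] by eventually_elim (subst (asm) eq, simp)
qed

lemma C1_deriv:
  assumes C1: "C1_Linf M u u'" and t: "0 \<le> t" and \<epsilon>: "0 < \<epsilon>"
  shows "\<exists>\<delta>>0. \<forall>h. h \<noteq> 0 \<and> -t \<le> h \<and> \<bar>h\<bar> < \<delta> \<longrightarrow>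
           (AE x in M. \<bar>u (t + h) x - u t x - h * u' t x\<bar> \<le> \<epsilon> * \<bar>h\<bar>)"
proof -
  have "((\<lambda>h. Linf_norm M (\<lambda>x. (u (t + h) x - u t x) / h - u' t x)) \<longlongrightarrow> 0) (at 0 within {-t..})"
    using C1 t unfolding C1_Linf_def by blast
  then have "\<forall>\<^sub>F h in at 0 within {-t..}. Linf_norm M (\<lambda>x. (u (t + h) x - u t x) / h - u' t x) < ereal \<epsilon>"
    using \<epsilon> by (intro order_tendstoD(2)) auto
  then obtain \<delta> where \<delta>: "\<delta> > 0" "\<forall>h\<in>{-t..}. h \<noteq> 0 \<and> dist h 0 < \<delta> \<longrightarrow>
      Linf_norm M (\<lambda>x. (u (t + h) x - u t x) / h - u' t x) < ereal \<epsilon>"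
    unfolding eventually_at by blast
  show ?thesis
  proof (intro exI[of _ \<delta>] conjI allI impI \<delta>(1))
    fix h :: real assume h: "h \<noteq> 0 \<and> - t \<le> h \<and> \<bar>h\<bar> < \<delta>"
    then have lt: "Linf_norm M (\<lambda>x. (u (t + h) x - u t x) / h - u' t x) < ereal \<epsilon>"
      using \<delta>(2) by auto
    show "AE x in M. \<bar>u (t + h) x - u t x - h * u' t x\<bar> \<le> \<epsilon> * \<bar>h\<bar>"
      using Linf_AE[where M=M and z="\<lambda>x. (u (t + h) x - u t x) / h - u' t x"]
    proof eventually_elim
      case (elim x)
      then have "ereal \<bar>(u (t + h) x - u t x) / h - u' t x\<bar> < ereal \<epsilon>" using lt by (rule le_less_trans)
      then have "\<bar>(u (t + h) x - u t x) / h - u' t x\<bar> \<le> \<epsilon>" by simp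
      then have "\<bar>h\<bar> * \<bar>(u (t + h) x - u t x) / h - u' t x\<bar> \<le> \<bar>h\<bar> * \<epsilon>"
        by (intro mult_left_mono) auto
      moreover have "\<bar>h\<bar> * \<bar>(u (t + h) x - u t x) / h - u' t x\<bar> = \<bar>u (t + h) x - u t x - h * u' t x\<bar>"
        using h by (simp add: abs_mult[symmetric] field_simps)
      ultimately show ?case by (simp add: mult.commute)
    qed
  qed
qed

lemma Linf_cont:
  assumes Lz: "\<forall>t\<ge>0. in_Linf M (z t)" and pos: "emeasure M (space M) \<noteq> 0"
    and lip: "\<forall>t\<ge>0. \<exists>C\<ge>0. \<exists>\<delta>>0. \<forall>h. -t \<le> h \<and> \<bar>h\<bar> < \<delta> \<longrightarrow>
                  (AE x in M. \<bar>z (t + h) x - z t x\<bar> \<le> C * \<bar>h\<bar>)"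
  shows "continuous_on {0..} (\<lambda>t. real_of_ereal (Linf_norm M (z t)))"
  unfolding continuous_on_iff
proof (intro ballI allI impI)
  fix t e :: real assume t: "t \<in> {0..}" and e: "0 < e"
  define N where "N s = real_of_ereal (Linf_norm M (z s))" for s
  obtain C \<delta> where C: "C \<ge> 0" "\<delta> > 0" "\<forall>h. -t \<le> h \<and> \<bar>h\<bar> < \<delta> \<longrightarrow>
                  (AE x in M. \<bar>z (t + h) x - z t x\<bar> \<le> C * \<bar>h\<bar>)"
    using lip t by force
  define d where "d = min \<delta> (e / (C + 1))"
  have d: "d > 0" using C e by (simp add: d_def)
  show "\<exists>d>0. \<forall>x'\<in>{0..}. dist x' t < d \<longrightarrow> dist (real_of_ereal (Linf_norm M (z x'))) (real_of_ereal (Linf_norm M (z t))) < e"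
  proof (intro exI[of _ d] conjI ballI impI d)
    fix s assume s: "s \<in> {0..}" "dist s t < d"
    define h where "h = s - t"
    have h: "-t \<le> h" "\<bar>h\<bar> < \<delta>" "\<bar>h\<bar> < e / (C + 1)" using s by (auto simp: h_def d_def dist_real_def)
    have ae: "AE x in M. \<bar>z s x - z t x\<bar> \<le> C * \<bar>h\<bar>" using C(3)[rule_format, of "s - t"] h by (simp add: h_def)
    have Ns: "AE x in M. \<bar>z s x\<bar> \<le> N s" and Nt: "AE x in M. \<bar>z t x\<bar> \<le> N t"
      using Linf_real(3)[OF _ pos] Lz s t by (auto simp: N_def)
    have ms: "z s \<in> borel_measurable M" and mt: "z t \<in> borel_measurable M"
      using Lz s t by (auto simp: in_Linf_def)
    have "Linf_norm M (z s) \<le> ereal (N t + C * \<bar>h\<bar>)"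
      by (rule Linf_le[OF ms]) (use ae Nt in \<open>eventually_elim, linarith\<close>)
    then have 1: "N s \<le> N t + C * \<bar>h\<bar>"
      using Linf_real(1)[OF _ pos, of "z s"] Lz s by (auto simp: N_def) (metis ereal_less_eq(3))
    have "Linf_norm M (z t) \<le> ereal (N s + C * \<bar>h\<bar>)"
      by (rule Linf_le[OF mt]) (use ae Ns in \<open>eventually_elim, linarith\<close>)
    then have 2: "N t \<le> N s + C * \<bar>h\<bar>"
      using Linf_real(1)[OF _ pos, of "z t"] Lz t by (auto simp: N_def) (metis ereal_less_eq(3))
    have "C * \<bar>h\<bar> \<le> C * (e / (C + 1))" using h C by (intro mult_left_mono) auto
    also have "\<dots> < e" using C e by (simp add: field_simps)
    finally show "dist (real_of_ereal (Linf_norm M (z s))) (real_of_ereal (Linf_norm M (z t))) < e"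
      using 1 2 unfolding N_def[symmetric] dist_real_def by linarith
  qed
qed

lemma Gamma_integrable:
  fixes \<gamma> :: "'a::euclidean_space \<Rightarrow> 'a \<Rightarrow> real"
  assumes int: "integrable (lebesgue_on \<Omega>) (\<gamma> x)" and nn: "\<forall>y\<in>\<Omega>. 0 \<le> \<gamma> x y"
    and zm: "z \<in> borel_measurable (lebesgue_on \<Omega>)"
    and zb: "AE y in lebesgue_on \<Omega>. \<bar>z y\<bar> \<le> B"
  shows "integrable (lebesgue_on \<Omega>) (\<lambda>y. \<gamma> x y * (z y - z x))"
proof (rule Bochner_Integration.integrable_bound)
  show "integrable (lebesgue_on \<Omega>) (\<lambda>y. \<gamma> x y * (B + \<bar>z x\<bar>))"
    using int by (rule integrable_mult_left)
  show "(\<lambda>y. \<gamma> x y * (z y - z x)) \<in> borel_measurable (lebesgue_on \<Omega>)"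
    using borel_measurable_integrable[OF int] zm by measurable
  show "AE y in lebesgue_on \<Omega>. norm (\<gamma> x y * (z y - z x)) \<le> norm (\<gamma> x y * (B + \<bar>z x\<bar>))"
    using zb AE_space
  proof eventually_elim
    case (elim y)
    then have y: "y \<in> \<Omega>" by simp
    have "\<bar>z y - z x\<bar> \<le> B + \<bar>z x\<bar>" using elim by linarith
    then have "\<bar>\<gamma> x y\<bar> * \<bar>z y - z x\<bar> \<le> \<bar>\<gamma> x y\<bar> * \<bar>B + \<bar>z x\<bar>\<bar>"
      by (intro mult_left_mono) auto
    then show ?case by (simp add: abs_mult)
  qed
qed

lemma Gamma_upper:
  fixes \<gamma> :: "'a::euclidean_space \<Rightarrow> 'a \<Rightarrow> real"
  assumes int: "integrable (lebesgue_on \<Omega>) (\<gamma> x)" and nn: "\<forall>y\<in>\<Omega>. 0 \<le> \<gamma> x y"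
    and zm: "z \<in> borel_measurable (lebesgue_on \<Omega>)"
    and zb: "AE y in lebesgue_on \<Omega>. \<bar>z y\<bar> \<le> B"
    and zZ: "AE y in lebesgue_on \<Omega>. z y \<le> Z"
  shows "Gamma_op \<Omega> \<gamma> z x \<le> (Z - z x) * (\<integral>y. \<gamma> x y \<partial>lebesgue_on \<Omega>)"
proof -
  have "Gamma_op \<Omega> \<gamma> z x \<le> (\<integral>y. \<gamma> x y * (Z - z x) \<partial>lebesgue_on \<Omega>)"
    unfolding Gamma_op_def
  proof (rule integral_mono_AE)
    show "integrable (lebesgue_on \<Omega>) (\<lambda>y. \<gamma> x y * (z y - z x))"
      by (rule Gamma_integrable[where \<gamma>=\<gamma> and x=x and z=z, OF int nn zm zb])
    show "integrable (lebesgue_on \<Omega>) (\<lambda>y. \<gamma> x y * (Z - z x))"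
      using int by (rule integrable_mult_left)
    show "AE y in lebesgue_on \<Omega>. \<gamma> x y * (z y - z x) \<le> \<gamma> x y * (Z - z x)"
      using zZ AE_space
    proof eventually_elim
      case (elim y)
      then show ?case using nn by (intro mult_left_mono) auto
    qed
  qed
  also have "\<dots> = (Z - z x) * (\<integral>y. \<gamma> x y \<partial>lebesgue_on \<Omega>)"
    by (simp add: mult.commute)
  finally show ?thesis .
qed

lemma Gamma_add:
  fixes \<gamma> :: "'a::euclidean_space \<Rightarrow> 'a \<Rightarrow> real"
  assumes int: "integrable (lebesgue_on \<Omega>) (\<gamma> x)" and nn: "\<forall>y\<in>\<Omega>. 0 \<le> \<gamma> x y"
    and am: "a \<in> borel_measurable (lebesgue_on \<Omega>)" and ab: "AE y in lebesgue_on \<Omega>. \<bar>a y\<bar> \<le> A"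
    and bm: "b \<in> borel_measurable (lebesgue_on \<Omega>)" and bb: "AE y in lebesgue_on \<Omega>. \<bar>b y\<bar> \<le> B"
  shows "Gamma_op \<Omega> \<gamma> (\<lambda>y. a y + b y) x = Gamma_op \<Omega> \<gamma> a x + Gamma_op \<Omega> \<gamma> b x"
proof -
  have "Gamma_op \<Omega> \<gamma> (\<lambda>y. a y + b y) x = (\<integral>y. \<gamma> x y * (a y - a x) + \<gamma> x y * (b y - b x) \<partial>lebesgue_on \<Omega>)"
    unfolding Gamma_op_def by (rule Bochner_Integration.integral_cong) (auto simp: algebra_simps)
  also have "\<dots> = Gamma_op \<Omega> \<gamma> a x + Gamma_op \<Omega> \<gamma> b x"
    unfolding Gamma_op_def
    by (rule Bochner_Integration.integral_add[OF Gamma_integrable[where \<gamma>=\<gamma> and x=x and z=a, OF int nn am ab] Gamma_integrable[where \<gamma>=\<gamma> and x=x and z=b, OF int nn bm bb]])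
  finally show ?thesis .
qed

lemma Gamma_diff_bound:
  fixes \<gamma>1 \<gamma>2 :: "'a::euclidean_space \<Rightarrow> 'a \<Rightarrow> real"
  assumes int1: "integrable (lebesgue_on \<Omega>) (\<gamma>1 x)" and nn1: "\<forall>y\<in>\<Omega>. 0 \<le> \<gamma>1 x y"
    and int2: "integrable (lebesgue_on \<Omega>) (\<gamma>2 x)" and nn2: "\<forall>y\<in>\<Omega>. 0 \<le> \<gamma>2 x y"
    and zm: "z \<in> borel_measurable (lebesgue_on \<Omega>)"
    and zb: "AE y in lebesgue_on \<Omega>. 0 \<le> z y \<and> z y \<le> U"
    and zx: "0 \<le> z x" "z x \<le> U" and d2: "0 \<le> d2"
  shows "\<bar>d1 * Gamma_op \<Omega> \<gamma>1 z x - d2 * Gamma_op \<Omega> \<gamma>2 z x\<bar>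
     \<le> U * (\<bar>d1 - d2\<bar> * (\<integral>y. \<gamma>1 x y \<partial>lebesgue_on \<Omega>) + d2 * (\<integral>y. \<bar>\<gamma>1 x y - \<gamma>2 x y\<bar> \<partial>lebesgue_on \<Omega>))"
proof -
  let ?M = "lebesgue_on \<Omega>"
  have zb': "AE y in ?M. \<bar>z y\<bar> \<le> U" using zb by eventually_elim auto
  have i1: "integrable ?M (\<lambda>y. \<gamma>1 x y * (z y - z x))" by (rule Gamma_integrable[where \<gamma>=\<gamma>1 and x=x and z=z, OF int1 nn1 zm zb'])
  have i2: "integrable ?M (\<lambda>y. \<gamma>2 x y * (z y - z x))" by (rule Gamma_integrable[where \<gamma>=\<gamma>2 and x=x and z=z, OF int2 nn2 zm zb'])
  have i3: "integrable ?M (\<lambda>y. \<bar>\<gamma>1 x y - \<gamma>2 x y\<bar>)"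
    using int1 int2 by (intro integrable_abs Bochner_Integration.integrable_diff)
  have "d1 * Gamma_op \<Omega> \<gamma>1 z x - d2 * Gamma_op \<Omega> \<gamma>2 z x
      = (\<integral>y. d1 * (\<gamma>1 x y * (z y - z x)) - d2 * (\<gamma>2 x y * (z y - z x)) \<partial>?M)"
    unfolding Gamma_op_def
    using i1 i2 by (simp add: Bochner_Integration.integral_diff)
  then have "\<bar>d1 * Gamma_op \<Omega> \<gamma>1 z x - d2 * Gamma_op \<Omega> \<gamma>2 z x\<bar>
      \<le> (\<integral>y. \<bar>d1 * (\<gamma>1 x y * (z y - z x)) - d2 * (\<gamma>2 x y * (z y - z x))\<bar> \<partial>?M)"
    by (simp only: integral_abs_bound)
  also have "\<dots> \<le> (\<integral>y. U * (\<bar>d1 - d2\<bar> * \<gamma>1 x y) + U * (d2 * \<bar>\<gamma>1 x y - \<gamma>2 x y\<bar>) \<partial>?M)"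
  proof (rule integral_mono_AE)
    show "integrable ?M (\<lambda>y. \<bar>d1 * (\<gamma>1 x y * (z y - z x)) - d2 * (\<gamma>2 x y * (z y - z x))\<bar>)"
      using i1 i2 by (intro integrable_abs Bochner_Integration.integrable_diff integrable_mult_right)
    show "integrable ?M (\<lambda>y. U * (\<bar>d1 - d2\<bar> * \<gamma>1 x y) + U * (d2 * \<bar>\<gamma>1 x y - \<gamma>2 x y\<bar>))"
      using int1 i3 by (intro Bochner_Integration.integrable_add integrable_mult_right)
    show "AE y in ?M. \<bar>d1 * (\<gamma>1 x y * (z y - z x)) - d2 * (\<gamma>2 x y * (z y - z x))\<bar>
        \<le> U * (\<bar>d1 - d2\<bar> * \<gamma>1 x y) + U * (d2 * \<bar>\<gamma>1 x y - \<gamma>2 x y\<bar>)"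
      using zb AE_space
    proof eventually_elim
      case (elim y)
      then have y: "y \<in> \<Omega>" by simp
      have g1: "0 \<le> \<gamma>1 x y" using nn1 y by auto
      have dz: "\<bar>z y - z x\<bar> \<le> U" using elim zx by linarith
      have "d1 * (\<gamma>1 x y * (z y - z x)) - d2 * (\<gamma>2 x y * (z y - z x))
          = ((d1 - d2) * \<gamma>1 x y + d2 * (\<gamma>1 x y - \<gamma>2 x y)) * (z y - z x)"
        by (simp add: algebra_simps)
      then have "\<bar>d1 * (\<gamma>1 x y * (z y - z x)) - d2 * (\<gamma>2 x y * (z y - z x))\<bar>
          = \<bar>(d1 - d2) * \<gamma>1 x y + d2 * (\<gamma>1 x y - \<gamma>2 x y)\<bar> * \<bar>z y - z x\<bar>"
        by (simp add: abs_mult)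
      also have "\<dots> \<le> (\<bar>d1 - d2\<bar> * \<gamma>1 x y + d2 * \<bar>\<gamma>1 x y - \<gamma>2 x y\<bar>) * U"
      proof (rule mult_mono)
        show "\<bar>(d1 - d2) * \<gamma>1 x y + d2 * (\<gamma>1 x y - \<gamma>2 x y)\<bar> \<le> \<bar>d1 - d2\<bar> * \<gamma>1 x y + d2 * \<bar>\<gamma>1 x y - \<gamma>2 x y\<bar>"
          using g1 d2 by (metis (no_types, opaque_lifting) abs_mult abs_of_nonneg abs_triangle_ineq)
      qed (use dz g1 d2 in auto)
      finally show ?case by (simp add: algebra_simps)
    qed
  qed
  also have "\<dots> = U * (\<bar>d1 - d2\<bar> * (\<integral>y. \<gamma>1 x y \<partial>?M) + d2 * (\<integral>y. \<bar>\<gamma>1 x y - \<gamma>2 x y\<bar> \<partial>?M))"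
    using int1 i3 by (simp add: Bochner_Integration.integral_add distrib_left)
  finally show ?thesis .
qed

lemma Linf_real_le:
  assumes "in_Linf M z" "emeasure M (space M) \<noteq> 0" "AE x in M. \<bar>z x\<bar> \<le> c"
  shows "real_of_ereal (Linf_norm M z) \<le> c"
proof -
  have "Linf_norm M z \<le> ereal c"
    using assms(1,3) by (intro Linf_le) (auto simp: in_Linf_def)
  then show ?thesis using Linf_real(1)[OF assms(1,2)] by (metis ereal_less_eq(3))
qed

lemma C1_lip:
  assumes C1: "C1_Linf M u u'" and pos: "emeasure M (space M) \<noteq> 0"
  shows "\<forall>t\<ge>0. \<exists>C\<ge>0. \<exists>\<delta>>0. \<forall>h. -t \<le> h \<and> \<bar>h\<bar> < \<delta> \<longrightarrow>
                  (AE x in M. \<bar>u (t + h) x - u t x\<bar> \<le> C * \<bar>h\<bar>)"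
proof (intro allI impI)
  fix t :: real assume t: "0 \<le> t"
  obtain \<delta> where \<delta>: "\<delta> > 0" "\<forall>h. h \<noteq> 0 \<and> -t \<le> h \<and> \<bar>h\<bar> < \<delta> \<longrightarrow>
           (AE x in M. \<bar>u (t + h) x - u t x - h * u' t x\<bar> \<le> 1 * \<bar>h\<bar>)"
    using C1_deriv[OF C1 t, of 1] by auto
  have Lu': "in_Linf M (u' t)" using C1 t by (simp add: C1_Linf_def)
  define C where "C = real_of_ereal (Linf_norm M (u' t)) + 1"
  have C0: "C \<ge> 0" using Linf_real(2)[OF Lu' pos] by (simp add: C_def)
  have bnd: "AE x in M. \<bar>u' t x\<bar> \<le> real_of_ereal (Linf_norm M (u' t))"
    by (rule Linf_real(3)[OF Lu' pos])
  show "\<exists>C\<ge>0. \<exists>\<delta>>0. \<forall>h. -t \<le> h \<and> \<bar>h\<bar> < \<delta> \<longrightarrow>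
                  (AE x in M. \<bar>u (t + h) x - u t x\<bar> \<le> C * \<bar>h\<bar>)"
  proof -
    have "\<forall>h. -t \<le> h \<and> \<bar>h\<bar> < \<delta> \<longrightarrow> (AE x in M. \<bar>u (t + h) x - u t x\<bar> \<le> C * \<bar>h\<bar>)"
    proof (intro allI impI)
    fix h :: real assume h: "- t \<le> h \<and> \<bar>h\<bar> < \<delta>"
    show "AE x in M. \<bar>u (t + h) x - u t x\<bar> \<le> C * \<bar>h\<bar>"
    proof (cases "h = 0")
      case True then show ?thesis by simp
    next
      case False
      then have a: "AE x in M. \<bar>u (t + h) x - u t x - h * u' t x\<bar> \<le> 1 * \<bar>h\<bar>" using \<delta>(2) h by blast
      show ?thesis using a bnd
      proof eventually_elim
        case (elim x)
        have "\<bar>h * u' t x\<bar> \<le> \<bar>h\<bar> * real_of_ereal (Linf_norm M (u' t))"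
          using elim(2) by (simp add: abs_mult mult_left_mono)
        then show ?case using elim(1) unfolding C_def by (simp add: algebra_simps)
      qed
    qed
    qed
    then show ?thesis using C0 \<delta>(1) by blast
  qed
qed

lemma lip_add:
  fixes u v :: "real \<Rightarrow> 'a \<Rightarrow> real" and M :: "'a measure"
  assumes "\<forall>t\<ge>0. \<exists>C\<ge>0. \<exists>\<delta>>0. \<forall>h. -t \<le> h \<and> \<bar>h\<bar> < \<delta> \<longrightarrow>
                  (AE x in M. \<bar>u (t + h) x - u t x\<bar> \<le> C * \<bar>h\<bar>)"
    and "\<forall>t\<ge>0. \<exists>C\<ge>0. \<exists>\<delta>>0. \<forall>h. -t \<le> h \<and> \<bar>h\<bar> < \<delta> \<longrightarrow>
                  (AE x in M. \<bar>v (t + h) x - v t x\<bar> \<le> C * \<bar>h\<bar>)"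
  shows "\<forall>t\<ge>0. \<exists>C\<ge>0. \<exists>\<delta>>0. \<forall>h. -t \<le> h \<and> \<bar>h\<bar> < \<delta> \<longrightarrow>
                  (AE x in M. \<bar>(u (t + h) x + v (t + h) x) - (u t x + v t x)\<bar> \<le> C * \<bar>h\<bar>)"
proof (intro allI impI)
  fix t :: real assume t: "0 \<le> t"
  obtain C1 \<delta>1 where 1: "C1 \<ge> 0" "\<delta>1 > 0" "\<forall>h. -t \<le> h \<and> \<bar>h\<bar> < \<delta>1 \<longrightarrow>
                  (AE x in M. \<bar>u (t + h) x - u t x\<bar> \<le> C1 * \<bar>h\<bar>)" using assms(1) t by blast
  obtain C2 \<delta>2 where 2: "C2 \<ge> 0" "\<delta>2 > 0" "\<forall>h. -t \<le> h \<and> \<bar>h\<bar> < \<delta>2 \<longrightarrow>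
                  (AE x in M. \<bar>v (t + h) x - v t x\<bar> \<le> C2 * \<bar>h\<bar>)" using assms(2) t by blast
  show "\<exists>C\<ge>0. \<exists>\<delta>>0. \<forall>h. -t \<le> h \<and> \<bar>h\<bar> < \<delta> \<longrightarrow>
                  (AE x in M. \<bar>(u (t + h) x + v (t + h) x) - (u t x + v t x)\<bar> \<le> C * \<bar>h\<bar>)"
  proof -
    have "\<forall>h. -t \<le> h \<and> \<bar>h\<bar> < min \<delta>1 \<delta>2 \<longrightarrow>
                  (AE x in M. \<bar>(u (t + h) x + v (t + h) x) - (u t x + v t x)\<bar> \<le> (C1 + C2) * \<bar>h\<bar>)"
    proof (intro allI impI)
      fix h :: real assume h: "- t \<le> h \<and> \<bar>h\<bar> < min \<delta>1 \<delta>2"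
      have a: "AE x in M. \<bar>u (t + h) x - u t x\<bar> \<le> C1 * \<bar>h\<bar>" using 1(3) h by auto
      have b: "AE x in M. \<bar>v (t + h) x - v t x\<bar> \<le> C2 * \<bar>h\<bar>" using 2(3) h by auto
      show "AE x in M. \<bar>(u (t + h) x + v (t + h) x) - (u t x + v t x)\<bar> \<le> (C1 + C2) * \<bar>h\<bar>"
        using a b by eventually_elim (simp add: distrib_right)
    qed
    moreover have "C1 + C2 \<ge> 0" "min \<delta>1 \<delta>2 > 0" using 1 2 by auto
    ultimately show ?thesis by blast
  qed
qed

lemma in_Linf_add:
  assumes "in_Linf M a" "in_Linf M b" "emeasure M (space M) \<noteq> 0"
  shows "in_Linf M (\<lambda>x. a x + b x)"
proof -
  have m: "(\<lambda>x. a x + b x) \<in> borel_measurable M" using assms by (auto simp: in_Linf_def)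
  have "Linf_norm M (\<lambda>x. a x + b x) \<le> ereal (real_of_ereal (Linf_norm M a) + real_of_ereal (Linf_norm M b))"
    using Linf_real(3)[OF assms(1,3)] Linf_real(3)[OF assms(2,3)]
    by (intro Linf_le[OF m]) (auto elim!: eventually_elim2)
  then show ?thesis using m unfolding in_Linf_def by (auto simp: le_less_trans)
qed

lemma arith_u:
  fixes a N g ginf G h d1 f v U' \<epsilon> :: real
  assumes "0 \<le> a" "a \<le> N" "0 \<le> g" "g \<le> ginf" "G \<le> (N - a) * g" "0 < h"
    "h * (d1 * ginf + f) \<le> 1" "0 < d1" "0 \<le> a * v\<^sup>2"
    "\<bar>U' - a - h * (d1 * G - a * v\<^sup>2 + f * (1 - a))\<bar> \<le> \<epsilon> * \<bar>h\<bar>"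
  shows "U' \<le> N + h * (f * 1 - f * N + \<epsilon>)"
proof -
  have 1: "h * (d1 * G) \<le> h * (d1 * ((N - a) * g))"
    using assms by (intro mult_left_mono) auto
  have 2: "0 \<le> h * (a * v\<^sup>2)" using assms by simp
  have "h * d1 * g \<le> h * d1 * ginf" using assms by (intro mult_left_mono) auto
  then have "h * d1 * g + h * f - 1 \<le> 0" using assms(7) by (simp add: algebra_simps)
  then have 3: "(N - a) * (h * d1 * g + h * f - 1) \<le> 0"
    using assms by (intro mult_nonneg_nonpos) auto
  have 4: "U' \<le> a + h * (d1 * G - a * v\<^sup>2 + f * (1 - a)) + \<epsilon> * h"
    using assms(6,10) by (simp add: abs_le_iff)
  show ?thesis using 1 2 3 4 by (simp add: algebra_simps)
qed

lemma arith_w: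
  fixes a W g ginf G h d2 f K D kv W' \<epsilon> :: real
  assumes "0 \<le> a" "a \<le> W" "0 \<le> g" "g \<le> ginf" "G \<le> (W - a) * g" "0 < h"
    "h * (d2 * ginf + f) \<le> 1" "0 < d2" "0 \<le> kv" "D \<le> K"
    "\<bar>W' - a - h * (d2 * G + D + f - f * a - kv)\<bar> \<le> \<epsilon> * \<bar>h\<bar>"
  shows "W' \<le> W + h * (K + f - f * W + \<epsilon>)"
proof -
  have 1: "h * (d2 * G) \<le> h * (d2 * ((W - a) * g))"
    using assms by (intro mult_left_mono) auto
  have 2: "0 \<le> h * kv" using assms by simp
  have 5: "h * D \<le> h * K" using assms by simp
  have "h * d2 * g \<le> h * d2 * ginf" using assms by (intro mult_left_mono) auto
  then have "h * d2 * g + h * f - 1 \<le> 0" using assms(7) by (simp add: algebra_simps)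
  then have 3: "(W - a) * (h * d2 * g + h * f - 1) \<le> 0"
    using assms by (intro mult_nonneg_nonpos) auto
  have 4: "W' \<le> a + h * (d2 * G + D + f - f * a - kv) + \<epsilon> * h"
    using assms(6,11) by (simp add: abs_le_iff)
  show ?thesis using 1 2 3 4 5 by (simp add: algebra_simps)
qed

theorem corollary2p3:
  fixes \<Omega> :: "'a::euclidean_space set"
    and d1 d2 f \<kappa> ginf :: real
    and \<gamma>1 \<gamma>2 :: "'a \<Rightarrow> 'a \<Rightarrow> real"
    and u0 v0 :: "'a \<Rightarrow> real"
    and u v u' v' :: "real \<Rightarrow> 'a \<Rightarrow> real"
  defines "M \<equiv> lebesgue_on \<Omega>"
  defines "m \<equiv> esssup M (\<lambda>x. ereal (\<integral>y. \<bar>\<gamma>1 x y - \<gamma>2 x y\<bar> \<partial>M))"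
  assumes dom: "open \<Omega>" "connected \<Omega>" "bounded \<Omega>" "\<Omega> \<noteq> {}"
    and params: "0 < d1" "0 < d2" "0 < f" "0 < \<kappa>"
    and ginf: "1 \<le> ginf"
    and ker1: "admissible_kernel \<Omega> ginf \<gamma>1"
    and ker2: "admissible_kernel \<Omega> ginf \<gamma>2"
    and init_pos: "in_Linf_pos M u0" "in_Linf_pos M v0"
    and C1u: "C1_Linf M u u'" and C1v: "C1_Linf M v v'"
    and pos: "\<forall>t\<ge>0. in_Linf_pos M (u t) \<and> in_Linf_pos M (v t)"
    and eq_u: "\<forall>t\<ge>0. AE x in M. u' t x =
                 d1 * Gamma_op \<Omega> \<gamma>1 (u t) x - u t x * (v t x)\<^sup>2 + f * (1 - u t x)"
    and eq_v: "\<forall>t\<ge>0. AE x in M. v' t x =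
                 d2 * Gamma_op \<Omega> \<gamma>2 (v t) x + u t x * (v t x)\<^sup>2 - (f + \<kappa>) * v t x"
    and init: "AE x in M. u 0 x = u0 x" "AE x in M. v 0 x = v0 x"
  shows "m \<le> ereal (2 * ginf)
    \<and> (\<forall>t\<ge>0. AE x in M. 0 \<le> u t x \<and>
          u t x \<le> 1 + exp (- f * t) * max 0 (real_of_ereal (Linf_norm M u0) - 1))
    \<and> (\<forall>t\<ge>0. AE x in M. 0 \<le> u t x + v t x \<and>
          u t x + v t x \<le> exp (- t * f) * real_of_ereal (Linf_norm M (\<lambda>y. u0 y + v0 y))
            + (1 - exp (- t * f)) / f *
              (2 * (\<bar>d1 - d2\<bar> * ginf + real_of_ereal m * d2) * (1 + real_of_ereal (Linf_norm M u0)) + f))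
    \<and> Limsup at_top (\<lambda>t. Linf_norm M (u t)) \<le> 1
    \<and> (Linf_norm M u0 \<le> 1 \<longrightarrow> (\<forall>t\<ge>0. Linf_norm M (u t) \<le> 1))"
proof -
  have Om: "open \<Omega>" using dom by simp
  have Oms: "\<Omega> \<in> sets lebesgue" using Om by (simp add: borel_open)
  have spM: "space M = \<Omega>" unfolding M_def by (simp add: space_restrict_space)
  have posM: "emeasure M (space M) \<noteq> 0"
  proof -
    have "emeasure M \<Omega> = emeasure lebesgue \<Omega>"
      unfolding M_def using Oms by (intro emeasure_restrict_space) auto
    moreover have "\<not> negligible \<Omega>" using open_not_negligible dom by blast
    ultimately show ?thesis using negligible_iff_emeasure0[OF Oms] spM by simp
  qed
  have g0: "0 \<le> ginf" using ginf by simp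
  have K1: "AE x in M. integrable M (\<gamma>1 x) \<and> (\<forall>y\<in>\<Omega>. 0 \<le> \<gamma>1 x y)
     \<and> 0 \<le> (\<integral>y. \<gamma>1 x y \<partial>M) \<and> (\<integral>y. \<gamma>1 x y \<partial>M) \<le> ginf"
    unfolding M_def by (rule kernel_good[OF ker1 Om g0])
  have K2: "AE x in M. integrable M (\<gamma>2 x) \<and> (\<forall>y\<in>\<Omega>. 0 \<le> \<gamma>2 x y)
     \<and> 0 \<le> (\<integral>y. \<gamma>2 x y \<partial>M) \<and> (\<integral>y. \<gamma>2 x y \<partial>M) \<le> ginf"
    unfolding M_def by (rule kernel_good[OF ker2 Om g0])
  have mAE: "AE x in M. ereal (\<integral>y. \<bar>\<gamma>1 x y - \<gamma>2 x y\<bar> \<partial>M) \<le> m"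
    unfolding m_def by (rule esssup_AE)
  have Imeas: "(\<lambda>x. \<integral>y. \<bar>\<gamma>1 x y - \<gamma>2 x y\<bar> \<partial>M) \<in> borel_measurable M"
    unfolding M_def using ker1 ker2 Om unfolding admissible_kernel_def
    by (intro kernel_diff_meas) auto
  have Ibnd: "AE x in M. 0 \<le> (\<integral>y. \<bar>\<gamma>1 x y - \<gamma>2 x y\<bar> \<partial>M) \<and> (\<integral>y. \<bar>\<gamma>1 x y - \<gamma>2 x y\<bar> \<partial>M) \<le> 2 * ginf"
    using K1 K2
  proof eventually_elim
    case (elim x)
    have pw: "\<forall>y\<in>\<Omega>. \<bar>\<gamma>1 x y - \<gamma>2 x y\<bar> \<le> \<gamma>1 x y + \<gamma>2 x y"
    proof
      fix y assume "y \<in> \<Omega>"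
      then have "0 \<le> \<gamma>1 x y" "0 \<le> \<gamma>2 x y" using elim by auto
      then show "\<bar>\<gamma>1 x y - \<gamma>2 x y\<bar> \<le> \<gamma>1 x y + \<gamma>2 x y" by (simp add: abs_le_iff)
    qed
    have "(\<integral>y. \<bar>\<gamma>1 x y - \<gamma>2 x y\<bar> \<partial>M) \<le> (\<integral>y. \<gamma>1 x y + \<gamma>2 x y \<partial>M)"
      using elim pw by (intro integral_mono integrable_abs Bochner_Integration.integrable_diff
          Bochner_Integration.integrable_add) (auto simp: spM)
    also have "\<dots> = (\<integral>y. \<gamma>1 x y \<partial>M) + (\<integral>y. \<gamma>2 x y \<partial>M)"
      using elim by (intro Bochner_Integration.integral_add) auto
    finally show ?case using elim by simp
  qed
  have part1: "m \<le> ereal (2 * ginf)"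
    unfolding m_def
    by (rule esssup_I) (use Imeas Ibnd in \<open>auto elim!: eventually_mono\<close>)
  have m_ge: "m \<ge> 0"
  proof (rule ccontr)
    assume neg: "\<not> m \<ge> 0"
    have "AE x in M. False" using mAE Ibnd
    proof eventually_elim
      case (elim x)
      then have "ereal 0 \<le> m" by (meson ereal_less_eq(3) order_trans)
      then have "0 \<le> m" by (simp add: zero_ereal_def)
      then show False using neg by blast
    qed
    then show False using posM AE_False_iff by blast
  qed
  define mr where "mr = real_of_ereal m"
  have m_eq: "m = ereal mr" and mr0: "0 \<le> mr"
    using part1 m_ge unfolding mr_def by (cases m; auto)+
  have Ile: "AE x in M. (\<integral>y. \<bar>\<gamma>1 x y - \<gamma>2 x y\<bar> \<partial>M) \<le> mr"
    using mAE by eventually_elim (simp add: m_eq)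
  have Lu: "\<And>t. t \<ge> 0 \<Longrightarrow> in_Linf M (u t)" and Lv: "\<And>t. t \<ge> 0 \<Longrightarrow> in_Linf M (v t)"
    using pos by (auto simp: in_Linf_pos_def)
  have Pu: "\<And>t. t \<ge> 0 \<Longrightarrow> AE x in M. 0 \<le> u t x" and Pv: "\<And>t. t \<ge> 0 \<Longrightarrow> AE x in M. 0 \<le> v t x"
    using pos by (auto simp: in_Linf_pos_def)
  have mu: "\<And>t. t \<ge> 0 \<Longrightarrow> u t \<in> borel_measurable M" and mv: "\<And>t. t \<ge> 0 \<Longrightarrow> v t \<in> borel_measurable M"
    using Lu Lv by (auto simp: in_Linf_def)
  have Lu0: "in_Linf M u0" and Lv0: "in_Linf M v0" using init_pos by (auto simp: in_Linf_pos_def)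
  define U0 where "U0 = real_of_ereal (Linf_norm M u0)"
  have U0: "0 \<le> U0" unfolding U0_def by (rule Linf_real(2)[OF Lu0 posM])
  define Nu where "Nu t = real_of_ereal (Linf_norm M (u t))" for t
  have Nu_bnd: "\<And>t. t \<ge> 0 \<Longrightarrow> AE x in M. \<bar>u t x\<bar> \<le> Nu t"
    unfolding Nu_def using Linf_real(3)[OF Lu posM] by blast
  have Nu0: "\<And>t. t \<ge> 0 \<Longrightarrow> 0 \<le> Nu t"
    unfolding Nu_def using Linf_real(2)[OF Lu posM] by blast
  have contNu: "continuous_on {0..} Nu"
    unfolding Nu_def by (rule Linf_cont[OF _ posM C1_lip[OF C1u posM]]) (use Lu in auto)
  have derNu: "\<forall>t\<ge>0. \<forall>\<epsilon>>0. \<exists>\<delta>>0. \<forall>h. 0 < h \<and> h < \<delta> \<longrightarrow> Nu (t + h) \<le> Nu t + h * (f * 1 - f * Nu t + \<epsilon>)"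
  proof (intro allI impI)
    fix t \<epsilon> :: real assume t: "0 \<le> t" and \<epsilon>: "0 < \<epsilon>"
    obtain \<delta>1 where \<delta>1: "\<delta>1 > 0" "\<forall>h. h \<noteq> 0 \<and> -t \<le> h \<and> \<bar>h\<bar> < \<delta>1 \<longrightarrow>
           (AE x in M. \<bar>u (t + h) x - u t x - h * u' t x\<bar> \<le> \<epsilon> * \<bar>h\<bar>)"
      using C1_deriv[OF C1u t \<epsilon>] by blast
    have pp: "0 < d1 * ginf + f" using params g0 by (simp add: add_nonneg_pos)
    define \<delta> where "\<delta> = min \<delta>1 (1 / (d1 * ginf + f))"
    have \<delta>: "\<delta> > 0" using \<delta>1 pp by (simp add: \<delta>_def)
    have "\<forall>h. 0 < h \<and> h < \<delta> \<longrightarrow> Nu (t + h) \<le> Nu t + h * (f * 1 - f * Nu t + \<epsilon>)"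
    proof (intro allI impI)
      fix h :: real assume h: "0 < h \<and> h < \<delta>"
      have th: "t + h \<ge> 0" using t h by simp
      have hs: "h * (d1 * ginf + f) \<le> 1"
        using h pp unfolding \<delta>_def by (simp add: field_simps)
      have a1: "AE x in M. \<bar>u (t + h) x - u t x - h * u' t x\<bar> \<le> \<epsilon> * \<bar>h\<bar>"
      proof -
        have "h \<noteq> 0 \<and> -t \<le> h \<and> \<bar>h\<bar> < \<delta>1" using h t unfolding \<delta>_def by auto
        then show ?thesis using \<delta>1(2) by blast
      qed
      have uZ: "AE y in M. u t y \<le> Nu t" using Nu_bnd[OF t] by eventually_elim simp
      have "AE x in M. \<bar>u (t + h) x\<bar> \<le> Nu t + h * (f * 1 - f * Nu t + \<epsilon>)"
        using a1 Nu_bnd[OF t] Pu[OF t] Pv[OF t] Pu[OF th] K1 eq_u[rule_format, OF t]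
      proof eventually_elim
        case (elim x)
        have Gu: "Gamma_op \<Omega> \<gamma>1 (u t) x \<le> (Nu t - u t x) * (\<integral>y. \<gamma>1 x y \<partial>M)"
          unfolding M_def
          by (rule Gamma_upper[where B="Nu t"]) (use elim mu[OF t, unfolded M_def] Nu_bnd[OF t, unfolded M_def] uZ[unfolded M_def] in \<open>auto simp: M_def\<close>)
        have "u (t + h) x \<le> Nu t + h * (f * 1 - f * Nu t + \<epsilon>)"
        proof (rule arith_u[where ginf=ginf and g="\<integral>y. \<gamma>1 x y \<partial>M" and G="Gamma_op \<Omega> \<gamma>1 (u t) x"
                 and v="v t x"])
          show "\<bar>u (t + h) x - u t x - h * (d1 * Gamma_op \<Omega> \<gamma>1 (u t) x - u t x * (v t x)\<^sup>2 + f * (1 - u t x))\<bar> \<le> \<epsilon> * \<bar>h\<bar>"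
            using elim by simp
        qed (use elim Gu h hs params in auto)
        then show ?case using elim by simp
      qed
      then show "Nu (t + h) \<le> Nu t + h * (f * 1 - f * Nu t + \<epsilon>)"
        unfolding Nu_def[of "t + h"] by (rule Linf_real_le[OF Lu[OF th] posM])
    qed
    then show "\<exists>\<delta>>0. \<forall>h. 0 < h \<and> h < \<delta> \<longrightarrow> Nu (t + h) \<le> Nu t + h * (f * 1 - f * Nu t + \<epsilon>)"
      using \<delta> by blast
  qed
  have Nu_init: "Nu 0 \<le> 1 + max 0 (U0 - 1)"
  proof -
    have "Nu 0 \<le> U0"
      unfolding Nu_def using init(1) Linf_real(3)[OF Lu0 posM]
      by (intro Linf_real_le[OF Lu posM]) (auto simp: U0_def elim!: eventually_elim2)
    then show ?thesis by simp
  qed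
  have ubound: "\<And>t. t \<ge> 0 \<Longrightarrow> Nu t \<le> 1 + max 0 (U0 - 1) * exp (- f * t)"
    by (rule cmp[OF params(3) contNu Nu_init derNu])
  have part2: "\<forall>t\<ge>0. AE x in M. 0 \<le> u t x \<and>
          u t x \<le> 1 + exp (- f * t) * max 0 (real_of_ereal (Linf_norm M u0) - 1)"
  proof (intro allI impI)
    fix t :: real assume t: "0 \<le> t"
    show "AE x in M. 0 \<le> u t x \<and> u t x \<le> 1 + exp (- f * t) * max 0 (real_of_ereal (Linf_norm M u0) - 1)"
      using Pu[OF t] Nu_bnd[OF t]
    proof eventually_elim
      case (elim x)
      then show ?case using ubound[OF t] by (auto simp: U0_def mult.commute)
    qed
  qed
  define Nv where "Nv t = real_of_ereal (Linf_norm M (v t))" for t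
  have Nv_bnd: "\<And>t. t \<ge> 0 \<Longrightarrow> AE x in M. \<bar>v t x\<bar> \<le> Nv t"
    unfolding Nv_def using Linf_real(3)[OF Lv posM] by blast
  have Lw: "\<And>t. t \<ge> 0 \<Longrightarrow> in_Linf M (\<lambda>x. u t x + v t x)"
    using in_Linf_add[OF Lu Lv posM] by blast
  define W where "W t = real_of_ereal (Linf_norm M (\<lambda>x. u t x + v t x))" for t
  have W_bnd: "\<And>t. t \<ge> 0 \<Longrightarrow> AE x in M. \<bar>u t x + v t x\<bar> \<le> W t"
    unfolding W_def using Linf_real(3)[OF Lw posM] by blast
  have contW: "continuous_on {0..} W"
  proof -
    have "continuous_on {0..} (\<lambda>t. real_of_ereal (Linf_norm M ((\<lambda>t x. u t x + v t x) t)))"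
      by (rule Linf_cont[OF _ posM]) (use Lw lip_add[OF C1_lip[OF C1u posM] C1_lip[OF C1v posM]] in auto)
    then show ?thesis unfolding W_def by simp
  qed
  define K where "K = 2 * (\<bar>d1 - d2\<bar> * ginf + mr * d2) * (1 + U0)"
  define c where "c = (K + f) / f"
  have fc: "f * c = K + f" using params by (simp add: c_def)
  have Kpos: "0 \<le> \<bar>d1 - d2\<bar> * ginf + mr * d2" using mr0 g0 params by simp
  have Nu_le: "\<And>t. t \<ge> 0 \<Longrightarrow> Nu t \<le> 1 + U0"
  proof -
    fix t :: real assume t: "t \<ge> 0"
    have "max 0 (U0 - 1) * exp (- f * t) \<le> max 0 (U0 - 1) * 1"
      using t params by (intro mult_left_mono) auto
    then show "Nu t \<le> 1 + U0" using ubound[OF t] U0 by simp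
  qed
  have derW: "\<forall>t\<ge>0. \<forall>\<epsilon>>0. \<exists>\<delta>>0. \<forall>h. 0 < h \<and> h < \<delta> \<longrightarrow> W (t + h) \<le> W t + h * (f * c - f * W t + \<epsilon>)"
  proof (intro allI impI)
    fix t \<epsilon> :: real assume t: "0 \<le> t" and \<epsilon>: "0 < \<epsilon>"
    have \<epsilon>2: "0 < \<epsilon> / 2" using \<epsilon> by simp
    obtain \<delta>1 where \<delta>1: "\<delta>1 > 0" "\<forall>h. h \<noteq> 0 \<and> -t \<le> h \<and> \<bar>h\<bar> < \<delta>1 \<longrightarrow>
           (AE x in M. \<bar>u (t + h) x - u t x - h * u' t x\<bar> \<le> \<epsilon> / 2 * \<bar>h\<bar>)"
      using C1_deriv[OF C1u t \<epsilon>2] by blast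
    obtain \<delta>2 where \<delta>2: "\<delta>2 > 0" "\<forall>h. h \<noteq> 0 \<and> -t \<le> h \<and> \<bar>h\<bar> < \<delta>2 \<longrightarrow>
           (AE x in M. \<bar>v (t + h) x - v t x - h * v' t x\<bar> \<le> \<epsilon> / 2 * \<bar>h\<bar>)"
      using C1_deriv[OF C1v t \<epsilon>2] by blast
    have pp: "0 < d2 * ginf + f" using params g0 by (simp add: add_nonneg_pos)
    define \<delta> where "\<delta> = min (min \<delta>1 \<delta>2) (1 / (d2 * ginf + f))"
    have \<delta>: "\<delta> > 0" using \<delta>1 \<delta>2 pp by (simp add: \<delta>_def)
    have "\<forall>h. 0 < h \<and> h < \<delta> \<longrightarrow> W (t + h) \<le> W t + h * (f * c - f * W t + \<epsilon>)"
    proof (intro allI impI)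
      fix h :: real assume h: "0 < h \<and> h < \<delta>"
      have th: "t + h \<ge> 0" using t h by simp
      have hs: "h * (d2 * ginf + f) \<le> 1"
        using h pp unfolding \<delta>_def by (simp add: field_simps)
      have a1: "AE x in M. \<bar>u (t + h) x - u t x - h * u' t x\<bar> \<le> \<epsilon> / 2 * \<bar>h\<bar>"
      proof -
        have "h \<noteq> 0 \<and> -t \<le> h \<and> \<bar>h\<bar> < \<delta>1" using h t unfolding \<delta>_def by auto
        then show ?thesis using \<delta>1(2) by blast
      qed
      have a2: "AE x in M. \<bar>v (t + h) x - v t x - h * v' t x\<bar> \<le> \<epsilon> / 2 * \<bar>h\<bar>"
      proof -
        have "h \<noteq> 0 \<and> -t \<le> h \<and> \<bar>h\<bar> < \<delta>2" using h t unfolding \<delta>_def by auto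
        then show ?thesis using \<delta>2(2) by blast
      qed
      have wZ: "AE y in M. u t y + v t y \<le> W t" using W_bnd[OF t] by eventually_elim simp
      have uZ: "AE y in M. 0 \<le> u t y \<and> u t y \<le> Nu t" using Nu_bnd[OF t] Pu[OF t] by eventually_elim simp
      have mw: "(\<lambda>y. u t y + v t y) \<in> borel_measurable M" using mu[OF t] mv[OF t] by simp
      have "AE x in M. \<bar>u (t + h) x + v (t + h) x\<bar> \<le> W t + h * (K + f - f * W t + \<epsilon>)"
        using a1 a2 Nu_bnd[OF t] W_bnd[OF t] Pu[OF t] Pv[OF t] Pu[OF th] Pv[OF th] K1 K2 Ile
          eq_u[rule_format, OF t] eq_v[rule_format, OF t]
      proof eventually_elim
        case (elim x)
        let ?g1 = "\<integral>y. \<gamma>1 x y \<partial>M" and ?g2 = "\<integral>y. \<gamma>2 x y \<partial>M"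
        let ?I = "\<integral>y. \<bar>\<gamma>1 x y - \<gamma>2 x y\<bar> \<partial>M"
        have GA: "Gamma_op \<Omega> \<gamma>2 (\<lambda>y. u t y + v t y) x = Gamma_op \<Omega> \<gamma>2 (u t) x + Gamma_op \<Omega> \<gamma>2 (v t) x"
          by (rule Gamma_add[where A="Nu t" and B="Nv t"])
             (use elim mu[OF t, unfolded M_def] mv[OF t, unfolded M_def] Nu_bnd[OF t, unfolded M_def] Nv_bnd[OF t, unfolded M_def] in \<open>auto simp: M_def\<close>)
        have GU: "Gamma_op \<Omega> \<gamma>2 (\<lambda>y. u t y + v t y) x \<le> (W t - (u t x + v t x)) * ?g2"
          unfolding M_def
          by (rule Gamma_upper[where B="W t"]) (use elim mw[unfolded M_def] W_bnd[OF t, unfolded M_def] wZ[unfolded M_def] in \<open>auto simp: M_def\<close>)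
        have GD: "\<bar>d1 * Gamma_op \<Omega> \<gamma>1 (u t) x - d2 * Gamma_op \<Omega> \<gamma>2 (u t) x\<bar>
            \<le> Nu t * (\<bar>d1 - d2\<bar> * ?g1 + d2 * ?I)"
          unfolding M_def
          by (rule Gamma_diff_bound) (use elim mu[OF t, unfolded M_def] uZ[unfolded M_def] params in \<open>auto simp: M_def\<close>)
        have "Nu t * (\<bar>d1 - d2\<bar> * ?g1 + d2 * ?I) \<le> (1 + U0) * (\<bar>d1 - d2\<bar> * ginf + mr * d2)"
        proof (rule mult_mono)
          show "\<bar>d1 - d2\<bar> * ?g1 + d2 * ?I \<le> \<bar>d1 - d2\<bar> * ginf + mr * d2"
          proof (rule add_mono)
            show "\<bar>d1 - d2\<bar> * ?g1 \<le> \<bar>d1 - d2\<bar> * ginf" using elim by (intro mult_left_mono) auto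
            show "d2 * ?I \<le> mr * d2" using elim params by (simp add: mult.commute)
          qed
        qed (use Nu_le[OF t] Nu0[OF t] Kpos elim params in \<open>auto intro!: add_nonneg_nonneg mult_nonneg_nonneg\<close>)
        also have "\<dots> \<le> K"
        proof -
          have p: "0 \<le> (1 + U0) * (\<bar>d1 - d2\<bar> * ginf + mr * d2)" using Kpos U0 by simp
          have "K = 2 * ((1 + U0) * (\<bar>d1 - d2\<bar> * ginf + mr * d2))" unfolding K_def by (simp add: algebra_simps)
          then show ?thesis using p by linarith
        qed
        finally have DK: "d1 * Gamma_op \<Omega> \<gamma>1 (u t) x - d2 * Gamma_op \<Omega> \<gamma>2 (u t) x \<le> K"
          using GD by linarith
        have "u (t + h) x + v (t + h) x \<le> W t + h * (K + f - f * W t + \<epsilon>)"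
        proof (rule arith_w[where ginf=ginf and g="?g2" and G="Gamma_op \<Omega> \<gamma>2 (\<lambda>y. u t y + v t y) x"
                 and kv="\<kappa> * v t x" and D="d1 * Gamma_op \<Omega> \<gamma>1 (u t) x - d2 * Gamma_op \<Omega> \<gamma>2 (u t) x"])
          have eqs: "h * u' t x + h * v' t x = h * (d2 * Gamma_op \<Omega> \<gamma>2 (\<lambda>y. u t y + v t y) x +
              (d1 * Gamma_op \<Omega> \<gamma>1 (u t) x - d2 * Gamma_op \<Omega> \<gamma>2 (u t) x) + f - f * (u t x + v t x) - \<kappa> * v t x)"
            unfolding elim(12) elim(13) GA by (simp add: algebra_simps)
          have "\<bar>(u (t + h) x + v (t + h) x) - (u t x + v t x) - (h * u' t x + h * v' t x)\<bar> \<le> \<epsilon> * \<bar>h\<bar>"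
          proof -
            have "\<bar>(u (t + h) x + v (t + h) x) - (u t x + v t x) - (h * u' t x + h * v' t x)\<bar>
                = \<bar>(u (t + h) x - u t x - h * u' t x) + (v (t + h) x - v t x - h * v' t x)\<bar>"
              by (simp add: algebra_simps)
            also have "\<dots> \<le> \<bar>u (t + h) x - u t x - h * u' t x\<bar> + \<bar>v (t + h) x - v t x - h * v' t x\<bar>"
              by (rule abs_triangle_ineq)
            also have "\<dots> \<le> \<epsilon> / 2 * \<bar>h\<bar> + \<epsilon> / 2 * \<bar>h\<bar>"
              using elim(1,2) by (rule add_mono)
            finally show ?thesis by simp
          qed
          then show "\<bar>u (t + h) x + v (t + h) x - (u t x + v t x) - h * (d2 * Gamma_op \<Omega> \<gamma>2 (\<lambda>y. u t y + v t y) x +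
              (d1 * Gamma_op \<Omega> \<gamma>1 (u t) x - d2 * Gamma_op \<Omega> \<gamma>2 (u t) x) + f - f * (u t x + v t x) - \<kappa> * v t x)\<bar> \<le> \<epsilon> * \<bar>h\<bar>"
            unfolding eqs[symmetric] .
        qed (use elim GU DK h hs params in auto)
        then show ?case using elim by simp
      qed
      then show "W (t + h) \<le> W t + h * (f * c - f * W t + \<epsilon>)"
        unfolding W_def[of "t + h"] fc by (rule Linf_real_le[OF Lw[OF th] posM])
    qed
    then show "\<exists>\<delta>>0. \<forall>h. 0 < h \<and> h < \<delta> \<longrightarrow> W (t + h) \<le> W t + h * (f * c - f * W t + \<epsilon>)"
      using \<delta> by blast
  qed
  define W0 where "W0 = real_of_ereal (Linf_norm M (\<lambda>y. u0 y + v0 y))"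
  have Lw0: "in_Linf M (\<lambda>y. u0 y + v0 y)" by (rule in_Linf_add[OF Lu0 Lv0 posM])
  have W_init: "W 0 \<le> c + (W0 - c)"
  proof -
    have "W 0 \<le> W0"
      unfolding W_def
    proof (intro Linf_real_le[OF Lw posM])
      show "AE x in M. \<bar>u 0 x + v 0 x\<bar> \<le> W0"
        using init(1) init(2) Linf_real(3)[OF Lw0 posM] by eventually_elim (simp add: W0_def)
    qed simp
    then show ?thesis by simp
  qed
  have wbound: "\<And>t. t \<ge> 0 \<Longrightarrow> W t \<le> c + (W0 - c) * exp (- f * t)"
    by (rule cmp[OF params(3) contW W_init derW])
  have part3: "\<forall>t\<ge>0. AE x in M. 0 \<le> u t x + v t x \<and>
          u t x + v t x \<le> exp (- t * f) * real_of_ereal (Linf_norm M (\<lambda>y. u0 y + v0 y))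
            + (1 - exp (- t * f)) / f *
              (2 * (\<bar>d1 - d2\<bar> * ginf + real_of_ereal m * d2) * (1 + real_of_ereal (Linf_norm M u0)) + f)"
  proof (intro allI impI)
    fix t :: real assume t: "0 \<le> t"
    have eq: "c + (W0 - c) * exp (- f * t) = exp (- t * f) * W0 + (1 - exp (- t * f)) / f * (K + f)"
      using params by (simp add: c_def field_simps mult.commute)
    have Keq: "K = 2 * (\<bar>d1 - d2\<bar> * ginf + real_of_ereal m * d2) * (1 + real_of_ereal (Linf_norm M u0))"
      by (simp add: K_def mr_def U0_def)
    show "AE x in M. 0 \<le> u t x + v t x \<and>
          u t x + v t x \<le> exp (- t * f) * real_of_ereal (Linf_norm M (\<lambda>y. u0 y + v0 y))
            + (1 - exp (- t * f)) / f *
              (2 * (\<bar>d1 - d2\<bar> * ginf + real_of_ereal m * d2) * (1 + real_of_ereal (Linf_norm M u0)) + f)"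
      using Pu[OF t] Pv[OF t] W_bnd[OF t]
    proof eventually_elim
      case (elim x)
      have "u t x + v t x \<le> exp (- t * f) * W0 + (1 - exp (- t * f)) / f * (K + f)"
        using elim wbound[OF t] eq by linarith
      then show ?case using elim(1,2) unfolding Keq W0_def by simp
    qed
  qed
  have Lbound: "\<And>t. t \<ge> 0 \<Longrightarrow> Linf_norm M (u t) \<le> ereal (1 + max 0 (U0 - 1) * exp (- f * t))"
  proof -
    fix t :: real assume t: "t \<ge> 0"
    have "Linf_norm M (u t) = ereal (Nu t)" unfolding Nu_def by (rule Linf_real(1)[OF Lu[OF t] posM])
    then show "Linf_norm M (u t) \<le> ereal (1 + max 0 (U0 - 1) * exp (- f * t))" using ubound[OF t] by simp
  qed
  have part4: "Limsup at_top (\<lambda>t. Linf_norm M (u t)) \<le> 1"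
  proof (rule ereal_le_epsilon2)
    fix e :: real assume e: "0 < e"
    define b where "b = max 0 (U0 - 1)"
    have b: "0 \<le> b" by (simp add: b_def)
    define T where "T = b / (f * e)"
    have "eventually (\<lambda>t. Linf_norm M (u t) \<le> 1 + ereal e) at_top"
      unfolding eventually_at_top_linorder
    proof (intro exI[of _ "max 0 T"] allI impI)
      fix t assume tT: "max 0 T \<le> t"
      then have t: "0 \<le> t" and tT': "T \<le> t" by auto
      have "b * exp (- f * t) \<le> e"
      proof -
        have ex: "1 + f * t \<le> exp (f * t)" using exp_ge_add_one_self by simp
        have pos1: "0 < 1 + f * t" using params t by (simp add: add_pos_nonneg)
        have "b \<le> e * (f * t)"
        proof -
          have "b = e * (f * T)" using params e by (simp add: T_def field_simps)
          also have "\<dots> \<le> e * (f * t)" using tT' params e by (intro mult_left_mono) auto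
          finally show ?thesis .
        qed
        then have "b \<le> e * (1 + f * t)" using e by (simp add: algebra_simps)
        also have "\<dots> \<le> e * exp (f * t)" using ex e by (intro mult_left_mono) auto
        finally have "b \<le> e * exp (f * t)" .
        then have "b / exp (f * t) \<le> e" by (simp add: divide_le_eq)
        then show ?thesis by (simp add: exp_minus field_simps)
      qed
      then have "Linf_norm M (u t) \<le> ereal (1 + e)" using Lbound[OF t] unfolding b_def
        by (meson ereal_less_eq(3) add_le_cancel_left order_trans)
      then show "Linf_norm M (u t) \<le> 1 + ereal e" by (simp add: add.commute)
    qed
    then show "Limsup at_top (\<lambda>t. Linf_norm M (u t)) \<le> 1 + ereal e"
      by (rule Limsup_bounded)
  qed
  have part5: "Linf_norm M u0 \<le> 1 \<longrightarrow> (\<forall>t\<ge>0. Linf_norm M (u t) \<le> 1)"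
  proof (intro impI allI)
    fix t :: real assume h: "Linf_norm M u0 \<le> 1" and t: "0 \<le> t"
    have "U0 \<le> 1"
      using h Linf_real(1)[OF Lu0 posM] unfolding U0_def by (metis ereal_less_eq(3) one_ereal_def)
    then have "max 0 (U0 - 1) = 0" by simp
    then show "Linf_norm M (u t) \<le> 1" using Lbound[OF t] by (simp add: one_ereal_def)
  qed
  show ?thesis using part1 part2 part3 part4 part5 by blast
qed

end
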